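(* Let $\varrho=\{\varrho_{t,T}\}_{t\in[0,T]}$ be a dynamic risk measure which is stochastically conditionally time-consistent, normalized, and translation invariant. Then for every $0\le t\le r\le T$ and every history $\xi_{[0,t]}\in\Xi_{0,t}$ there exists a functional $\varsigma^{\xi_{[0,t]}}_{t,r}:\mathcal L_\infty(\Xi^{\xi_t}_{t,r},P^{\xi_t}_{t,r})\to\mathbb R$, law invariant with respect to $P^{\xi_t}_{t,r}$ (i.e. its value at a random variable depends only on the distribution of that random variable under $P^{\xi_t}_{t,r}$), such that for every $c\in\mathcal L_\infty([0,T]\times\mathcal X)$ and $f\in\mathcal L_\infty(\mathcal X)$ the random variable $Z_T=\int_0^T c_\tau(X_\tau)\,d\tau+f(X_T)$ satisfies \[ \varrho_{t,T}(Z_T)(\xi_{[0,t]})=\int_0^t c_\tau(\xi_\tau)\,d\tau+\varsigma^{\xi_{[0,t]}}_{t,r}\Big(I^{\xi_t}_{t,r}(c)+\varrho_{r,T}\big(I^{X^{t,\xi_t}_r}_{r,T}(c)+f(X^{t,\xi_t}_T)\big)\Big), \] where the argument of $\varsigma^{\xi_{[0,t]}}_{t,r}$ is the random variable on $(\Xi^{\xi_t}_{t,r},P^{\xi_t}_{t,r})$ obtained by evaluating $\int_t^r c_\tau(X_\tau)\,d\tau+\varrho_{r,T}\big(\int_r^T c_\tau(X_\tau)\,d\tau+f(X_T)\big)$ along paths whose restriction to $[0,t]$ is $\xi_{[0,t]}$.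
   Context: Let $\mathcal X$ be a finite state space, $T>0$, and $\{X_t\}_{0\le t\le T}$ a continuous-time Markov chain with values in $\mathcal X$, starting at a fixed state $x_0$, with transition function $Q_{t,r}(y|x)=P(X_r=y\mid X_t=x)$. The transition rates $G_t(y|x)=\lim_{\tau\downarrow0}\frac1\tau[Q_{t,t+\tau}(y|x)-\delta_x(y)]$ are assumed to exist, be finite and be uniformly bounded over $t\in[0,T]$. For $0\le t<r\le T$ and $\xi\in\mathcal X$, $\Xi^{\xi}_{t,r}$ denotes the space of piecewise-constant right-continuous paths $[t,r]\to\mathcal X$ starting at $\xi$, $P^{\xi}_{t,r}$ the law on it of the chain started at $\xi$ at time $t$, $X^{t,\xi}=\{X^{t,\xi}_\tau\}$ a process with this law, and $\Xi_{0,t}=\bigcup_{\xi}\Xi^{\xi}_{0,t}$. $\{\mathcal F_t\}$ is the filtration generated by $X$, and $\mathcal Z_t$ is the space of bounded $\mathcal F_t$-measurable random variables, identified with measurable functionals of the path $\xi_{[0,t]}$. $\mathcal L_\infty([t,r]\times\mathcal X)$ is the space of measurable essentially bounded $c:[t,r]\times\mathcal X\to\mathbb R$, $\mathcal L_\infty(\mathcal X)$ the space of functions $\mathcal X\to\mathbb R$. For $c$ and $\xi_t\in\mathcal X$, $I^{\xi_t}_{t,r}(c)=\int_t^r c_\tau(X^{t,\xi_t}_\tau)\,d\tau$. A conditional risk measure is a mapping $\varrho_{t,T}:\mathcal Z_T\to\mathcal Z_t$; a dynamic risk measure is a family $\{\varrho_{t,T}\}_{t\in[0,T]}$. It is normalized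 if $\varrho_{t,T}(0)=0$; translation invariant if $\varrho_{t,T}(Z_t+Z_T)=Z_t+\varrho_{t,T}(Z_T)$ for all $Z_t\in\mathcal Z_t,Z_T\in\mathcal Z_T$. For a history $\xi_{[0,t]}$ and $r\in[t,T]$, $\varrho_{r,T}(Z_T)\mid\xi_{[0,t]}$ denotes $\varrho_{r,T}(Z_T)$ regarded as a function of the path on $[t,r]$ continuing $\xi_{[0,t]}$, with distribution induced by $P^{\xi_t}_{t,r}$; $\varrho_{t,T}(Z_T)(\xi_{[0,t]})$ is the value at the history. $U\preceq_{\rm st}V$ means $P(U>\eta)\le P(V>\eta)$ for all $\eta\in\mathbb R$. $\varrho$ is stochastically conditionally time-consistent if for all $0\le t\le r\le T$, all $\xi_{[0,t]}$ and all $Z_T,W_T\in\mathcal Z_T$, $\varrho_{r,T}(Z_T)\mid\xi_{[0,t]}\preceq_{\rm st}\varrho_{r,T}(W_T)\mid\xi_{[0,t]}$ implies $\varrho_{t,T}(Z_T)(\xi_{[0,t]})\le\varrho_{t,T}(W_T)(\xi_{[0,t]})$. *)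

theory Defs
  imports "HOL-Probability.Probability"
begin

text \<open>A path on [a,b] is a function real => state that is extended constantly
outside [a,b] (so it is determined by its values on [a,b]), and is piecewise
constant and right-continuous on [a,b]: there is a finite set S of jump times
such that the path is constant on every interval [tau1,tau2] inside [a,b)
that contains no point of S in (tau1,tau2].\<close>

definition clamp :: "real \<Rightarrow> real \<Rightarrow> real \<Rightarrow> real" where
  "clamp a b s = max a (min b s)"

definition restr :: "real \<Rightarrow> real \<Rightarrow> (real \<Rightarrow> 'x) \<Rightarrow> (real \<Rightarrow> 'x)" where
  "restr a b \<omega> = (\<lambda>s. \<omega> (clamp a b s))"

definition paths :: "real \<Rightarrow> real \<Rightarrow> (real \<Rightarrow> 'x) set" where
  "paths a b = {\<omega>. (\<forall>s. \<omega> s = \<omega> (clamp a b s)) \<and>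
      (\<exists>S::real set. finite S \<and>
         (\<forall>\<tau>1 \<tau>2. a \<le> \<tau>1 \<and> \<tau>1 \<le> \<tau>2 \<and> \<tau>2 < b \<and> {\<tau>1<..\<tau>2} \<inter> S = {} \<longrightarrow> \<omega> \<tau>1 = \<omega> \<tau>2))}"

definition paths_from :: "real \<Rightarrow> real \<Rightarrow> 'x \<Rightarrow> (real \<Rightarrow> 'x) set" where
  "paths_from a b \<xi> = {\<omega> \<in> paths a b. \<omega> a = \<xi>}"

definition path_meas :: "real \<Rightarrow> real \<Rightarrow> (real \<Rightarrow> 'x) measure" where
  "path_meas a b = sigma (paths a b)
     {{\<omega> \<in> paths a b. \<omega> \<tau> = y} | \<tau> y. \<tau> \<in> {a..b}}"

definition path_meas_from :: "real \<Rightarrow> real \<Rightarrow> 'x \<Rightarrow> (real \<Rightarrow> 'x) measure" where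
  "path_meas_from a b \<xi> = sigma (paths_from a b \<xi>)
     {{\<omega> \<in> paths_from a b \<xi>. \<omega> \<tau> = y} | \<tau> y. \<tau> \<in> {a..b}}"

definition path_concat :: "real \<Rightarrow> (real \<Rightarrow> 'x) \<Rightarrow> (real \<Rightarrow> 'x) \<Rightarrow> (real \<Rightarrow> 'x)" where
  "path_concat t \<xi> \<eta> = (\<lambda>s. if s \<le> t then \<xi> s else \<eta> s)"

definition path_int :: "(real \<Rightarrow> 'x \<Rightarrow> real) \<Rightarrow> real \<Rightarrow> real \<Rightarrow> (real \<Rightarrow> 'x) \<Rightarrow> real" where
  "path_int c a b \<omega> = set_lebesgue_integral lborel {a..b} (\<lambda>\<tau>. c \<tau> (\<omega> \<tau>))"

text \<open>Finite-dimensional distributions built from the transition function: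
Q s s' y x = P(X_{s'} = y | X_s = x).\<close>
fun fdd :: "(real \<Rightarrow> real \<Rightarrow> 'x \<Rightarrow> 'x \<Rightarrow> real) \<Rightarrow> real \<Rightarrow> 'x \<Rightarrow> real list \<Rightarrow> 'x list \<Rightarrow> real" where
  "fdd Q s x [] [] = 1"
| "fdd Q s x (s' # ss) (y # ys) = Q s s' y x * fdd Q s' y ss ys"
| "fdd Q s x _ _ = 0"

text \<open>P t r xi is the law P^xi_{t,r} on Xi^xi_{t,r} of the chain started at xi at
time t, with transition function Q; G are the transition rates, which exist,
are finite and are uniformly bounded.\<close>
definition markov_chain_laws ::
  "real \<Rightarrow> (real \<Rightarrow> real \<Rightarrow> 'x \<Rightarrow> 'x \<Rightarrow> real) \<Rightarrow> (real \<Rightarrow> 'x \<Rightarrow> 'x \<Rightarrow> real)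
     \<Rightarrow> (real \<Rightarrow> real \<Rightarrow> 'x \<Rightarrow> (real \<Rightarrow> 'x) measure) \<Rightarrow> bool" where
  "markov_chain_laws T Q G P \<longleftrightarrow>
     (\<forall>t r \<xi>. 0 \<le> t \<and> t \<le> r \<and> r \<le> T \<longrightarrow>
        prob_space (P t r \<xi>) \<and>
        space (P t r \<xi>) = paths_from t r \<xi> \<and>
        sets (P t r \<xi>) = sets (path_meas_from t r \<xi>) \<and>
        (\<forall>ss ys. sorted ss \<and> set ss \<subseteq> {t..r} \<and> length ss = length ys \<longrightarrow>
           measure (P t r \<xi>) {\<omega> \<in> space (P t r \<xi>). list_all2 (\<lambda>s y. \<omega> s = y) ss ys}
             = fdd Q t \<xi> ss ys)) \<and>
     (\<forall>t \<in> {0..<T}. \<forall>x y.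
        ((\<lambda>\<tau>. (Q t (t + \<tau>) y x - (if x = y then 1 else 0)) / \<tau>) \<longlongrightarrow> G t y x) (at_right 0)) \<and>
     (\<exists>K. \<forall>t \<in> {0..<T}. \<forall>x y. \<bar>G t y x\<bar> \<le> K)"

definition Zsp :: "real \<Rightarrow> ((real \<Rightarrow> 'x) \<Rightarrow> real) set" where
  "Zsp t = {Z. Z \<in> borel_measurable (path_meas 0 t) \<and> (\<exists>B. \<forall>\<omega> \<in> paths 0 t. \<bar>Z \<omega>\<bar> \<le> B)}"

text \<open>A dynamic risk measure: for each t, a mapping Z_T -> Z_t (elements of Z_T
being functionals on Xi_{0,T}, the result depends only on them).\<close>
definition dynamic_risk_measure ::
  "real \<Rightarrow> (real \<Rightarrow> ((real \<Rightarrow> 'x) \<Rightarrow> real) \<Rightarrow> ((real \<Rightarrow> 'x) \<Rightarrow> real)) \<Rightarrow> bool" where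
  "dynamic_risk_measure T \<rho> \<longleftrightarrow>
     (\<forall>t \<in> {0..T}. \<forall>Z \<in> Zsp T. \<rho> t Z \<in> Zsp t) \<and>
     (\<forall>t \<in> {0..T}. \<forall>Z \<in> Zsp T. \<forall>W \<in> Zsp T.
        (\<forall>\<omega> \<in> paths 0 T. Z \<omega> = W \<omega>) \<longrightarrow> (\<forall>\<omega> \<in> paths 0 t. \<rho> t Z \<omega> = \<rho> t W \<omega>))"

definition normalized ::
  "real \<Rightarrow> (real \<Rightarrow> ((real \<Rightarrow> 'x) \<Rightarrow> real) \<Rightarrow> ((real \<Rightarrow> 'x) \<Rightarrow> real)) \<Rightarrow> bool" where
  "normalized T \<rho> \<longleftrightarrow> (\<forall>t \<in> {0..T}. \<forall>\<omega> \<in> paths 0 t. \<rho> t (\<lambda>_. 0) \<omega> = 0)"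

text \<open>Z_t in Z_t is regarded as an element of Z_T via the restriction of the path to [0,t].\<close>
definition translation_invariant ::
  "real \<Rightarrow> (real \<Rightarrow> ((real \<Rightarrow> 'x) \<Rightarrow> real) \<Rightarrow> ((real \<Rightarrow> 'x) \<Rightarrow> real)) \<Rightarrow> bool" where
  "translation_invariant T \<rho> \<longleftrightarrow>
     (\<forall>t \<in> {0..T}. \<forall>Zt \<in> Zsp t. \<forall>Z \<in> Zsp T. \<forall>\<omega> \<in> paths 0 t.
        \<rho> t (\<lambda>\<omega>'. Zt (restr 0 t \<omega>') + Z \<omega>') \<omega> = Zt \<omega> + \<rho> t Z \<omega>)"

definition stoch_le :: "'a measure \<Rightarrow> ('a \<Rightarrow> real) \<Rightarrow> ('a \<Rightarrow> real) \<Rightarrow> bool" where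
  "stoch_le M U V \<longleftrightarrow>
     (\<forall>e. measure M {x \<in> space M. U x > e} \<le> measure M {x \<in> space M. V x > e})"

definition stoch_cond_time_consistent ::
  "real \<Rightarrow> (real \<Rightarrow> real \<Rightarrow> 'x \<Rightarrow> (real \<Rightarrow> 'x) measure)
     \<Rightarrow> (real \<Rightarrow> ((real \<Rightarrow> 'x) \<Rightarrow> real) \<Rightarrow> ((real \<Rightarrow> 'x) \<Rightarrow> real)) \<Rightarrow> bool" where
  "stoch_cond_time_consistent T P \<rho> \<longleftrightarrow>
     (\<forall>t r. 0 \<le> t \<and> t \<le> r \<and> r \<le> T \<longrightarrow>
       (\<forall>\<xi> \<in> paths 0 t. \<forall>Z \<in> Zsp T. \<forall>W \<in> Zsp T.
          stoch_le (P t r (\<xi> t)) (\<lambda>\<eta>. \<rho> r Z (path_concat t \<xi> \<eta>)) (\<lambda>\<eta>. \<rho> r W (path_concat t \<xi> \<eta>))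
          \<longrightarrow> \<rho> t Z \<xi> \<le> \<rho> t W \<xi>))"

definition Linf :: "'a measure \<Rightarrow> ('a \<Rightarrow> real) set" where
  "Linf M = {V. V \<in> borel_measurable M \<and> (\<exists>B. AE x in M. \<bar>V x\<bar> \<le> B)}"

definition law_invariant :: "'a measure \<Rightarrow> (('a \<Rightarrow> real) \<Rightarrow> real) \<Rightarrow> bool" where
  "law_invariant M \<sigma> \<longleftrightarrow>
     (\<forall>V \<in> Linf M. \<forall>W \<in> Linf M. distr M borel V = distr M borel W \<longrightarrow> \<sigma> V = \<sigma> W)"

definition Linf_ts :: "real \<Rightarrow> real \<Rightarrow> (real \<Rightarrow> 'x \<Rightarrow> real) set" where
  "Linf_ts a b = {c. (\<lambda>(\<tau>, x). c \<tau> x) \<in> borel_measurable (restrict_space borel {a..b} \<Otimes>\<^sub>M count_space UNIV)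
      \<and> (\<exists>B. \<forall>x. AE \<tau> in lborel. \<tau> \<in> {a..b} \<longrightarrow> \<bar>c \<tau> x\<bar> \<le> B)}"

end

theory Submission
  imports Defs
begin

lemma h_bounds: "\<tau> \<le> of_int \<lceil>\<tau> * 2^n\<rceil> / (2::real)^n \<and> of_int \<lceil>\<tau> * 2^n\<rceil> / (2::real)^n < \<tau> + (1/2)^n"
proof -
  have p: "(0::real) < 2^n" by simp
  have "\<tau> * 2^n \<le> of_int \<lceil>\<tau> * 2^n\<rceil>" "of_int \<lceil>\<tau> * 2^n\<rceil> < \<tau> * 2^n + 1" by linarith+
  then show ?thesis using p by (auto simp: field_simps power_divide)
qed

lemma small_pow: "(e::real) > 0 \<Longrightarrow> \<exists>N. \<forall>n\<ge>N. (1/2::real)^n < e"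
proof -
  assume "e > 0"
  then obtain N where "(1/2::real)^N < e" using real_arch_pow_inv[of e "1/2"] by auto
  moreover have "n \<ge> N \<Longrightarrow> (1/2::real)^n \<le> (1/2)^N" for n by (rule power_decreasing) auto
  ultimately show ?thesis by (meson le_less_trans)
qed

lemma ap_event:
  assumes "\<omega> \<in> paths a b" "a \<le> b"
  shows "\<exists>N. \<forall>n\<ge>N. \<omega> (clamp a b (of_int \<lceil>\<tau> * 2^n\<rceil> / 2^n)) = \<omega> \<tau>"
proof -
  define h where "h n = of_int \<lceil>\<tau> * 2^n\<rceil> / (2::real)^n" for n
  have hb: "\<tau> \<le> h n" "h n < \<tau> + (1/2)^n" for n using h_bounds[of \<tau> n] by (auto simp: h_def)
  from assms(1) have cl: "\<And>s. \<omega> s = \<omega> (clamp a b s)" and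
    "\<exists>S::real set. finite S \<and> (\<forall>\<tau>1 \<tau>2. a \<le> \<tau>1 \<and> \<tau>1 \<le> \<tau>2 \<and> \<tau>2 < b \<and> {\<tau>1<..\<tau>2} \<inter> S = {} \<longrightarrow> \<omega> \<tau>1 = \<omega> \<tau>2)"
    unfolding paths_def by auto
  then obtain S :: "real set" where S: "finite S"
    "\<And>\<tau>1 \<tau>2. a \<le> \<tau>1 \<Longrightarrow> \<tau>1 \<le> \<tau>2 \<Longrightarrow> \<tau>2 < b \<Longrightarrow> {\<tau>1<..\<tau>2} \<inter> S = {} \<Longrightarrow> \<omega> \<tau>1 = \<omega> \<tau>2" by blast
  consider "\<tau> \<ge> b" | "\<tau> < a" | "a \<le> \<tau>" "\<tau> < b" by linarith
  then show ?thesis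
  proof cases
    case 1
    have "\<omega> (clamp a b (h n)) = \<omega> \<tau>" for n
      using hb[of n] 1 assms(2) cl[of \<tau>] by (simp add: clamp_def)
    then show ?thesis by (auto simp: h_def)
  next
    case 2
    obtain N where N: "\<forall>n\<ge>N. (1/2::real)^n < a - \<tau>" using small_pow[of "a - \<tau>"] 2 by auto
    have "\<omega> (clamp a b (h n)) = \<omega> \<tau>" if "n \<ge> N" for n
    proof -
      have "h n < a" using hb[of n] N that by force
      then show ?thesis using assms(2) cl[of \<tau>] 2 by (simp add: clamp_def)
    qed
    then show ?thesis by (auto simp: h_def)
  next
    case 3
    define D where "D = insert (b - \<tau>) ((\<lambda>s. s - \<tau>) ` {s\<in>S. s > \<tau>})"
    have Df: "finite D" "D \<noteq> {}" using S(1) by (auto simp: D_def)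
    define \<delta> where "\<delta> = Min D"
    have dpos: "\<delta> > 0" using Df 3 unfolding \<delta>_def by (auto simp: D_def)
    have db: "\<delta> \<le> b - \<tau>" using Df unfolding \<delta>_def D_def by auto
    have dS: "s \<in> S \<Longrightarrow> s > \<tau> \<Longrightarrow> s \<ge> \<tau> + \<delta>" for s
    proof -
      assume "s \<in> S" "s > \<tau>"
      then have "s - \<tau> \<in> D" by (auto simp: D_def)
      then have "\<delta> \<le> s - \<tau>" unfolding \<delta>_def using Df by simp
      then show ?thesis by simp
    qed
    obtain N where N: "\<forall>n\<ge>N. (1/2::real)^n < \<delta>" using small_pow[OF dpos] by auto
    have "\<omega> (clamp a b (h n)) = \<omega> \<tau>" if "n \<ge> N" for n
    proof -
      have hl: "\<tau> \<le> h n" "h n < \<tau> + \<delta>" using hb[of n] N that by auto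
      then have "clamp a b (h n) = h n" using 3 db by (simp add: clamp_def)
      moreover have "{\<tau><..h n} \<inter> S = {}" using dS hl by force
      then have "\<omega> \<tau> = \<omega> (h n)" using S(2)[of \<tau> "h n"] 3 hl db by linarith
      ultimately show ?thesis by simp
    qed
    then show ?thesis by (auto simp: h_def)
  qed
qed

lemma space_path_meas[simp]: "space (path_meas a b) = paths a b"
  by (simp add: path_meas_def space_measure_of_conv)

lemma sets_path_meas: "sets (path_meas a b) = sigma_sets (paths a b) {{\<omega> \<in> paths a b. \<omega> \<tau> = y} | \<tau> y. \<tau> \<in> {a..b}}"
  unfolding path_meas_def by (subst sets_measure_of_conv) auto

lemma coord_meas:
  assumes "s \<in> {a..b}"
  shows "(\<lambda>\<omega>. \<omega> s) \<in> measurable (path_meas a b) (count_space (UNIV::'x::finite set))"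
proof (subst measurable_count_space_eq2_countable, intro conjI ballI)
  fix y :: 'x
  have "(\<lambda>\<omega>. \<omega> s) -` {y} \<inter> space (path_meas a b) = {\<omega> \<in> paths a b. \<omega> s = y}" by auto
  also have "\<dots> \<in> sets (path_meas a b)" unfolding sets_path_meas
    by (rule sigma_sets.Basic) (use assms in blast)
  finally show "(\<lambda>\<omega>. \<omega> s) -` {y} \<inter> space (path_meas a b) \<in> sets (path_meas a b)" .
qed auto

lemma clamp_in: "a \<le> b \<Longrightarrow> clamp a b s \<in> {a..b}"
  by (auto simp: clamp_def)

lemma joint_ind:
  fixes x :: "'x::finite"
  assumes "a \<le> b"
  shows "(\<lambda>p. if fst p (snd p) = x then 1 else 0 :: real) \<in> borel_measurable (path_meas a b \<Otimes>\<^sub>M lborel)"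
proof (rule borel_measurable_LIMSEQ_real)
  fix n :: nat
  let ?F = "\<lambda>(i::int) p. if fst p (clamp a b (of_int i / 2^n)) = x then 1 else (0::real)"
  have "(\<lambda>p. ?F i p) \<in> borel_measurable (path_meas a b \<Otimes>\<^sub>M lborel)" for i
  proof -
    have "(\<lambda>p. fst p (clamp a b (of_int i / 2^n))) \<in> measurable (path_meas a b \<Otimes>\<^sub>M lborel) (count_space (UNIV::'x set))"
      using measurable_comp[OF measurable_fst coord_meas[OF clamp_in[OF assms]]] by (simp add: comp_def)
    then show ?thesis
      using measurable_comp[of _ _ "count_space (UNIV::'x set)" "\<lambda>y. if y = x then 1 else (0::real)" borel]
      by (simp add: comp_def)
  qed
  moreover have "(\<lambda>p. \<lceil>snd p * (2::real)^n\<rceil>) \<in> measurable (path_meas a b \<Otimes>\<^sub>M lborel) (count_space UNIV)"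
    by measurable
  ultimately show "(\<lambda>p. ?F \<lceil>snd p * (2::real)^n\<rceil> p) \<in> borel_measurable (path_meas a b \<Otimes>\<^sub>M lborel)"
    by (rule measurable_compose_countable)
next
  fix p :: "(real \<Rightarrow> 'x) \<times> real" assume "p \<in> space (path_meas a b \<Otimes>\<^sub>M lborel)"
  then have "fst p \<in> paths a b" by (auto simp: space_pair_measure mem_Times_iff)
  from ap_event[OF this assms, of "snd p"] obtain N where
    "\<forall>n\<ge>N. fst p (clamp a b (of_int \<lceil>snd p * (2::real)^n\<rceil> / 2^n)) = fst p (snd p)" by blast
  then have "eventually (\<lambda>n. (if fst p (clamp a b (of_int \<lceil>snd p * (2::real)^n\<rceil> / 2^n)) = x then 1 else 0 :: real)
     = (if fst p (snd p) = x then 1 else 0)) sequentially"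
    unfolding eventually_sequentially by (intro exI[of _ N]) auto
  then show "(\<lambda>n. if fst p (clamp a b (of_int \<lceil>snd p * (2::real)^n\<rceil> / 2^n)) = x then 1 else 0 :: real)
     \<longlonglongrightarrow> (if fst p (snd p) = x then 1 else 0)"
    by (rule tendsto_eventually)
qed

lemma c_x_meas:
  assumes "c \<in> Linf_ts 0 T" "{a..b} \<subseteq> {0..T}"
  shows "(\<lambda>\<tau>. indicator {a..b} \<tau> * c \<tau> (x::'x::finite)) \<in> borel_measurable lborel"
proof -
  have "(\<lambda>(\<tau>, x). c \<tau> x) \<in> borel_measurable (restrict_space borel {0..T} \<Otimes>\<^sub>M count_space UNIV)"
    using assms(1) by (simp add: Linf_ts_def)
  moreover have "(\<lambda>\<tau>. (\<tau>, x)) \<in> measurable (restrict_space borel {0..T}) (restrict_space borel {0..T} \<Otimes>\<^sub>M count_space UNIV)"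
    by measurable
  ultimately have "(\<lambda>\<tau>. c \<tau> x) \<in> borel_measurable (restrict_space borel {0..T})"
    using measurable_comp by (fastforce simp: comp_def)
  then have m: "(\<lambda>\<tau>. indicator {0..T} \<tau> *\<^sub>R c \<tau> x) \<in> borel_measurable borel"
    by (subst (asm) borel_measurable_restrict_space_iff) auto
  have "(\<lambda>\<tau>. indicator {a..b} \<tau> * (indicator {0..T} \<tau> *\<^sub>R c \<tau> x)) \<in> borel_measurable borel"
    using m by measurable
  moreover have "(\<lambda>\<tau>. indicator {a..b} \<tau> * (indicator {0..T} \<tau> *\<^sub>R c \<tau> x)) = (\<lambda>\<tau>. indicator {a..b} \<tau> * c \<tau> x)"
    using assms(2) by (auto simp: indicator_def)
  ultimately show ?thesis by simp
qed

lemma integrand_meas: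
  fixes c :: "real \<Rightarrow> 'x::finite \<Rightarrow> real"
  assumes "c \<in> Linf_ts 0 T" "a0 \<le> b0" "{a..b} \<subseteq> {0..T}"
  shows "(\<lambda>p. indicator {a..b} (snd p) * c (snd p) (fst p (snd p))) \<in> borel_measurable (path_meas a0 b0 \<Otimes>\<^sub>M lborel)"
proof -
  have eq: "indicator {a..b} (snd p) * c (snd p) (fst p (snd p)) =
    (\<Sum>x\<in>UNIV. (indicator {a..b} (snd p) * c (snd p) x) * (if fst p (snd p) = x then 1 else 0))" for p :: "(real \<Rightarrow> 'x) \<times> real"
    by (simp add: if_distrib[where f="\<lambda>y. _ * y"] cong: if_cong)
  have "(\<lambda>p. \<Sum>x\<in>UNIV. (indicator {a..b} (snd p) * c (snd p) x) * (if fst p (snd p) = x then 1 else (0::real)))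
     \<in> borel_measurable (path_meas a0 b0 \<Otimes>\<^sub>M lborel)" (is "?S \<in> _")
  proof -
    have m1: "(\<lambda>p. indicator {a..b} (snd p) * c (snd p) x) \<in> borel_measurable (path_meas a0 b0 \<Otimes>\<^sub>M lborel)" for x
      using measurable_comp[OF measurable_snd c_x_meas[OF assms(1,3), of x]] by (simp add: comp_def)
    have m2: "(\<lambda>p. if fst p (snd p) = x then 1 else (0::real)) \<in> borel_measurable (path_meas a0 b0 \<Otimes>\<^sub>M lborel)" for x :: 'x
      by (rule joint_ind[OF assms(2)])
    show ?thesis by (rule borel_measurable_sum, rule borel_measurable_times[OF m1 m2])
  qed
  then show ?thesis by (simp only: eq)
qed

lemma path_int_meas:
  fixes c :: "real \<Rightarrow> 'x::finite \<Rightarrow> real"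
  assumes "c \<in> Linf_ts 0 T" "a0 \<le> b0" "{a..b} \<subseteq> {0..T}"
  shows "path_int c a b \<in> borel_measurable (path_meas a0 b0)"
proof -
  have "(\<lambda>\<omega>. \<integral>\<tau>. indicator {a..b} \<tau> * c \<tau> (\<omega> \<tau>) \<partial>lborel) \<in> borel_measurable (path_meas a0 b0)"
    using integrand_meas[OF assms] by (intro lborel.borel_measurable_lebesgue_integral) (simp add: case_prod_beta)
  then show ?thesis by (simp add: path_int_def[abs_def] set_lebesgue_integral_def)
qed

lemma c_bound:
  fixes c :: "real \<Rightarrow> 'x::finite \<Rightarrow> real"
  assumes "c \<in> Linf_ts 0 T" "{a..b} \<subseteq> {0..T}"
  obtains B where "AE \<tau> in lborel. \<forall>x. \<bar>indicator {a..b} \<tau> * c \<tau> x\<bar> \<le> B * indicator {a..b} \<tau>"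
proof -
  obtain B where B: "\<forall>x. AE \<tau> in lborel. \<tau> \<in> {0..T} \<longrightarrow> \<bar>c \<tau> x\<bar> \<le> B" using assms(1) by (auto simp: Linf_ts_def)
  then have "AE \<tau> in lborel. \<forall>x\<in>UNIV. \<tau> \<in> {0..T} \<longrightarrow> \<bar>c \<tau> x\<bar> \<le> B"
    by (intro AE_finite_allI) auto
  then have "AE \<tau> in lborel. \<forall>x. \<bar>indicator {a..b} \<tau> * c \<tau> x\<bar> \<le> B * indicator {a..b} \<tau>"
    by eventually_elim (use assms(2) in \<open>auto simp: indicator_def\<close>)
  then show ?thesis using that by blast
qed

lemma aux_bound: "\<forall>y. \<bar>g y\<bar> \<le> (K::real) \<Longrightarrow> norm (g z) \<le> norm K"
proof -
  assume "\<forall>y. \<bar>g y\<bar> \<le> K"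
  then have "\<bar>g z\<bar> \<le> K" by blast
  then show ?thesis by simp
qed

lemma integrand_integrable:
  fixes c :: "real \<Rightarrow> 'x::finite \<Rightarrow> real"
  assumes "c \<in> Linf_ts 0 T" "a0 \<le> b0" "{a..b} \<subseteq> {0..T}" "\<omega> \<in> paths a0 b0"
  shows "integrable lborel (\<lambda>\<tau>. indicator {a..b} \<tau> * c \<tau> (\<omega> \<tau>))"
proof -
  obtain B where B: "AE \<tau> in lborel. \<forall>x. \<bar>indicator {a..b} \<tau> * c \<tau> x\<bar> \<le> B * indicator {a..b} \<tau>"
    using c_bound[OF assms(1,3)] by blast
  have m: "(\<lambda>\<tau>. indicator {a..b} \<tau> * c \<tau> (\<omega> \<tau>)) \<in> borel_measurable lborel"
    using measurable_Pair2[OF integrand_meas[OF assms(1-3)], of \<omega>] assms(4) by simp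
  have "integrable lborel (\<lambda>\<tau>. B * indicator {a..b} \<tau> :: real)"
    by (intro integrable_mult_right integrable_real_indicator) (auto simp: emeasure_lborel_Icc_eq)
  then show ?thesis
    by (rule Bochner_Integration.integrable_bound[OF _ m]) (rule eventually_mono[OF B], erule aux_bound)
qed

lemma path_int_bound:
  fixes c :: "real \<Rightarrow> 'x::finite \<Rightarrow> real"
  assumes "c \<in> Linf_ts 0 T" "{a..b} \<subseteq> {0..T}" "a0 \<le> b0"
  shows "\<exists>K. \<forall>\<omega>\<in>paths a0 b0. \<bar>path_int c a b \<omega>\<bar> \<le> K"
proof -
  obtain B where B: "AE \<tau> in lborel. \<forall>x. \<bar>indicator {a..b} \<tau> * c \<tau> x\<bar> \<le> B * indicator {a..b} \<tau>"
    using c_bound[OF assms(1,2)] by blast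
  have ig: "integrable lborel (\<lambda>\<tau>. B * indicator {a..b} \<tau> :: real)"
    by (intro integrable_mult_right integrable_real_indicator) (auto simp: emeasure_lborel_Icc_eq)
  have "\<bar>path_int c a b \<omega>\<bar> \<le> \<bar>B * measure lborel {a..b}\<bar>" if \<omega>: "\<omega> \<in> paths a0 b0" for \<omega> :: "real \<Rightarrow> 'x"
  proof -
    have i: "integrable lborel (\<lambda>\<tau>. indicator {a..b} \<tau> * c \<tau> (\<omega> \<tau>))"
      by (rule integrand_integrable[OF assms(1,3,2) \<omega>])
    have B': "AE \<tau> in lborel. \<bar>indicator {a..b} \<tau> * c \<tau> (\<omega> \<tau>)\<bar> \<le> B * indicator {a..b} \<tau>"
      by (rule eventually_mono[OF B]) (erule spec)
    have "(\<integral>\<tau>. indicator {a..b} \<tau> * c \<tau> (\<omega> \<tau>) \<partial>lborel) \<le> (\<integral>\<tau>. B * indicator {a..b} \<tau> \<partial>lborel)"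
      by (rule integral_mono_AE[OF i ig]) (rule eventually_mono[OF B'], erule abs_le_D1)
    moreover have "(\<integral>\<tau>. -(B * indicator {a..b} \<tau>) \<partial>lborel) \<le> (\<integral>\<tau>. indicator {a..b} \<tau> * c \<tau> (\<omega> \<tau>) \<partial>lborel)"
      by (rule integral_mono_AE[OF integrable_minus[OF ig] i]) (rule eventually_mono[OF B'], drule abs_le_D2, linarith)
    ultimately show ?thesis by (simp add: path_int_def set_lebesgue_integral_def)
  qed
  then show ?thesis by blast
qed

lemma concat_in_paths:
  assumes \<xi>: "\<xi> \<in> paths 0 t" and \<eta>: "\<eta> \<in> paths_from t r (\<xi> t)" and tr: "0 \<le> t" "t \<le> r"
  shows "path_concat t \<xi> \<eta> \<in> paths 0 r"
proof -
  from \<xi> obtain S1 where clx: "\<And>s. \<xi> s = \<xi> (clamp 0 t s)" and S1: "finite S1"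
    "\<And>\<tau>1 \<tau>2. 0 \<le> \<tau>1 \<Longrightarrow> \<tau>1 \<le> \<tau>2 \<Longrightarrow> \<tau>2 < t \<Longrightarrow> {\<tau>1<..\<tau>2} \<inter> S1 = {} \<Longrightarrow> \<xi> \<tau>1 = \<xi> \<tau>2"
    unfolding paths_def by blast
  from \<eta> obtain S2 where cle: "\<And>s. \<eta> s = \<eta> (clamp t r s)" and S2: "finite S2"
    "\<And>\<tau>1 \<tau>2. t \<le> \<tau>1 \<Longrightarrow> \<tau>1 \<le> \<tau>2 \<Longrightarrow> \<tau>2 < r \<Longrightarrow> {\<tau>1<..\<tau>2} \<inter> S2 = {} \<Longrightarrow> \<eta> \<tau>1 = \<eta> \<tau>2"
    and e0: "\<eta> t = \<xi> t"
    unfolding paths_def paths_from_def by blast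
  let ?c = "path_concat t \<xi> \<eta>"
  have cl: "?c s = ?c (clamp 0 r s)" for s
  proof -
    consider "s \<le> 0" | "0 < s" "s < r" | "r \<le> s" by linarith
    then show ?thesis
    proof cases
      case 1
      then have "clamp 0 r s = 0" "clamp 0 t s = 0" using tr by (auto simp: clamp_def)
      then show ?thesis using 1 tr clx[of s] by (simp add: path_concat_def)
    next
      case 2
      then show ?thesis by (simp add: clamp_def)
    next
      case 3
      then have cr: "clamp 0 r s = r" "clamp t r s = r" using tr by (auto simp: clamp_def)
      show ?thesis
      proof (cases "s \<le> t")
        case True
        then have "s = t" "r = t" using 3 tr by auto
        then show ?thesis using cr by (simp add: path_concat_def)
      next
        case False
        then show ?thesis using cr cle[of s] e0 tr antisym[of r t] by (auto simp: path_concat_def)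
      qed
    qed
  qed
  have jm: "?c \<tau>1 = ?c \<tau>2" if "0 \<le> \<tau>1" "\<tau>1 \<le> \<tau>2" "\<tau>2 < r" "{\<tau>1<..\<tau>2} \<inter> (S1 \<union> S2 \<union> {t}) = {}" for \<tau>1 \<tau>2
  proof (cases "\<tau>1 = \<tau>2")
    case True then show ?thesis by simp
  next
    case False
    then have lt: "\<tau>1 < \<tau>2" using that by simp
    have nt: "\<not> (\<tau>1 < t \<and> t \<le> \<tau>2)" using that(4) by auto
    show ?thesis
    proof (cases "\<tau>2 < t")
      case True
      then have "\<xi> \<tau>1 = \<xi> \<tau>2" using S1(2)[of \<tau>1 \<tau>2] that by blast
      then show ?thesis using True lt by (simp add: path_concat_def)
    next
      case False
      then have "t \<le> \<tau>1" using nt lt by linarith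
      then have "\<eta> \<tau>1 = \<eta> \<tau>2" using S2(2)[of \<tau>1 \<tau>2] that by blast
      then show ?thesis using False lt \<open>t \<le> \<tau>1\<close> e0 by (auto simp: path_concat_def)
    qed
  qed
  show ?thesis unfolding paths_def
    using cl jm S1(1) S2(1) by (intro CollectI conjI allI exI[of _ "S1 \<union> S2 \<union> {t}"]) auto
qed

lemma path_int_split:
  fixes c :: "real \<Rightarrow> 'x::finite \<Rightarrow> real"
  assumes "c \<in> Linf_ts 0 T" "a0 \<le> b0" "\<omega> \<in> paths a0 b0" "0 \<le> a" "a \<le> m" "m \<le> b" "b \<le> T"
  shows "path_int c a b \<omega> = path_int c a m \<omega> + path_int c m b \<omega>"
proof -
  let ?g = "\<lambda>A \<tau>. indicator A \<tau> * c \<tau> (\<omega> \<tau>)"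
  have i1: "integrable lborel (?g {a..m})" and i2: "integrable lborel (?g {m..b})"
    using integrand_integrable[OF assms(1,2) _ assms(3)] assms by auto
  have i0: "integrable lborel (?g {a..b})"
    using integrand_integrable[OF assms(1,2) _ assms(3)] assms by auto
  have "(\<integral>\<tau>. ?g {a..b} \<tau> \<partial>lborel) = (\<integral>\<tau>. ?g {a..m} \<tau> + ?g {m..b} \<tau> \<partial>lborel)"
  proof (rule integral_cong_AE)
    show "?g {a..b} \<in> borel_measurable lborel" using i0 by auto
    show "(\<lambda>\<tau>. ?g {a..m} \<tau> + ?g {m..b} \<tau>) \<in> borel_measurable lborel" using i1 i2 by auto
    show "AE \<tau> in lborel. ?g {a..b} \<tau> = ?g {a..m} \<tau> + ?g {m..b} \<tau>"
      by (rule eventually_mono[OF AE_lborel_singleton[of m]]) (use assms in \<open>auto simp: indicator_def\<close>)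
  qed
  also have "\<dots> = (\<integral>\<tau>. ?g {a..m} \<tau> \<partial>lborel) + (\<integral>\<tau>. ?g {m..b} \<tau> \<partial>lborel)"
    by (rule Bochner_Integration.integral_add[OF i1 i2])
  finally show ?thesis by (simp add: path_int_def set_lebesgue_integral_def)
qed

lemma path_int_cong:
  assumes "\<And>\<tau>. \<tau> \<in> {a..b} \<Longrightarrow> \<omega> \<tau> = \<omega>' \<tau>"
  shows "path_int c a b \<omega> = path_int c a b \<omega>'"
proof -
  have "(\<lambda>\<tau>. indicator {a..b} \<tau> *\<^sub>R c \<tau> (\<omega> \<tau>)) = (\<lambda>\<tau>. indicator {a..b} \<tau> *\<^sub>R c \<tau> (\<omega>' \<tau>))"
    using assms by (auto simp: indicator_def)
  then show ?thesis by (simp add: path_int_def set_lebesgue_integral_def)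
qed

lemma Zsp_cong:
  assumes "Z \<in> Zsp t" "\<And>\<omega>. \<omega> \<in> paths 0 t \<Longrightarrow> Z \<omega> = W \<omega>"
  shows "W \<in> Zsp t"
proof -
  have "Z \<in> borel_measurable (path_meas 0 t)" using assms(1) by (simp add: Zsp_def)
  then have "W \<in> borel_measurable (path_meas 0 t)"
    by (rule measurable_cong[THEN iffD1, rotated]) (use assms(2) in auto)
  moreover obtain B where "\<forall>\<omega>\<in>paths 0 t. \<bar>Z \<omega>\<bar> \<le> B" using assms(1) by (auto simp: Zsp_def)
  then have "\<forall>\<omega>\<in>paths 0 t. \<bar>W \<omega>\<bar> \<le> B" using assms(2) by auto
  ultimately show ?thesis by (auto simp: Zsp_def)
qed

lemma Zsp_add_const:
  assumes "Z \<in> Zsp t"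
  shows "(\<lambda>\<omega>. k + Z \<omega>) \<in> Zsp t"
proof -
  have "Z \<in> borel_measurable (path_meas 0 t)" using assms(1) by (simp add: Zsp_def)
  then have "(\<lambda>\<omega>. k + Z \<omega>) \<in> borel_measurable (path_meas 0 t)" by measurable
  moreover obtain B where "\<forall>\<omega>\<in>paths 0 t. \<bar>Z \<omega>\<bar> \<le> B" using assms(1) by (auto simp: Zsp_def)
  then have "\<forall>\<omega>\<in>paths 0 t. \<bar>k + Z \<omega>\<bar> \<le> \<bar>k\<bar> + B" by (auto intro: order_trans[OF abs_triangle_ineq] add_mono)
  ultimately show ?thesis by (auto simp: Zsp_def)
qed

lemma Zsp_const: "(\<lambda>_. k) \<in> Zsp t"
  by (auto simp: Zsp_def)

lemma Zsp_path_int: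
  fixes c :: "real \<Rightarrow> 'x::finite \<Rightarrow> real"
  assumes "c \<in> Linf_ts 0 T" "0 \<le> b0" "{a..b} \<subseteq> {0..T}"
  shows "path_int c a b \<in> Zsp b0"
  using path_int_meas[OF assms(1,2,3)] path_int_bound[OF assms(1,3,2)] by (auto simp: Zsp_def)

lemma f_bound: "\<exists>K. \<forall>x. \<bar>(f::'x::finite \<Rightarrow> real) x\<bar> \<le> K"
  by (intro exI[of _ "\<Sum>x\<in>UNIV. \<bar>f x\<bar>"] allI member_le_sum) auto

lemma Zsp_cf:
  fixes c :: "real \<Rightarrow> 'x::finite \<Rightarrow> real"
  assumes "c \<in> Linf_ts 0 T" "0 \<le> a" "a \<le> T"
  shows "(\<lambda>\<omega>. path_int c a T \<omega> + f (\<omega> T)) \<in> Zsp T"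
proof -
  have m1: "path_int c a T \<in> borel_measurable (path_meas 0 T)"
    by (rule path_int_meas[OF assms(1)]) (use assms in auto)
  have "(\<lambda>\<omega>. \<omega> T) \<in> measurable (path_meas 0 T) (count_space (UNIV::'x set))"
    by (rule coord_meas) (use assms in auto)
  then have m2: "(\<lambda>\<omega>. f (\<omega> T)) \<in> borel_measurable (path_meas 0 T)"
    using measurable_comp[of _ _ "count_space (UNIV::'x set)" f borel] by (simp add: comp_def)
  obtain B1 where B1: "\<forall>\<omega>\<in>paths 0 T. \<bar>path_int c a T \<omega>\<bar> \<le> B1"
    using path_int_bound[OF assms(1), of a T 0 T] assms by auto
  obtain B2 where B2: "\<forall>x. \<bar>f x\<bar> \<le> B2" using f_bound by blast
  have "\<forall>\<omega>\<in>paths 0 T. \<bar>path_int c a T \<omega> + f (\<omega> T)\<bar> \<le> B1 + B2"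
    using B1 B2 by (auto intro: order_trans[OF abs_triangle_ineq] add_mono)
  then show ?thesis using m1 m2 by (auto simp: Zsp_def)
qed

theorem theorem4p1:
  fixes T :: real
    and Q :: "real \<Rightarrow> real \<Rightarrow> 'x::finite \<Rightarrow> 'x \<Rightarrow> real"
    and G :: "real \<Rightarrow> 'x \<Rightarrow> 'x \<Rightarrow> real"
    and P :: "real \<Rightarrow> real \<Rightarrow> 'x \<Rightarrow> (real \<Rightarrow> 'x) measure"
    and \<rho> :: "real \<Rightarrow> ((real \<Rightarrow> 'x) \<Rightarrow> real) \<Rightarrow> ((real \<Rightarrow> 'x) \<Rightarrow> real)"
  assumes "T > 0"
    and "markov_chain_laws T Q G P"
    and "dynamic_risk_measure T \<rho>"
    and "stoch_cond_time_consistent T P \<rho>"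
    and "normalized T \<rho>"
    and "translation_invariant T \<rho>"
  shows "\<forall>t r \<xi>. 0 \<le> t \<and> t \<le> r \<and> r \<le> T \<and> \<xi> \<in> paths 0 t \<longrightarrow>
           (\<exists>\<sigma>. law_invariant (P t r (\<xi> t)) \<sigma> \<and>
              (\<forall>c (f :: 'x \<Rightarrow> real). c \<in> Linf_ts 0 T \<longrightarrow>
                 \<rho> t (\<lambda>\<omega>. path_int c 0 T \<omega> + f (\<omega> T)) \<xi>
                   = path_int c 0 t \<xi>
                     + \<sigma> (\<lambda>\<eta>. path_int c t r \<eta>
                              + \<rho> r (\<lambda>\<omega>. path_int c r T \<omega> + f (\<omega> T)) (path_concat t \<xi> \<eta>))))"
proof (intro allI impI)
  fix t r and \<xi> :: "real \<Rightarrow> 'x"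
  assume H: "0 \<le> t \<and> t \<le> r \<and> r \<le> T \<and> \<xi> \<in> paths 0 t"
  then have t0: "0 \<le> t" and tr: "t \<le> r" and rT: "r \<le> T" and \<xi>: "\<xi> \<in> paths 0 t" by auto
  define M where "M = P t r (\<xi> t)"
  have spM: "space M = paths_from t r (\<xi> t)"
    using assms(2) t0 tr rT unfolding markov_chain_laws_def M_def by auto
  define EQ where "EQ W V \<longleftrightarrow> (\<forall>e. measure M {\<eta> \<in> space M. \<rho> r W (path_concat t \<xi> \<eta>) > e}
      = measure M {\<eta> \<in> space M. V \<eta> > e})" for W V
  define \<sigma> where "\<sigma> V = \<rho> t (SOME W. W \<in> Zsp T \<and> EQ W V) \<xi>" for V
  have TI: "\<And>s Zt Z \<omega>. s \<in> {0..T} \<Longrightarrow> Zt \<in> Zsp s \<Longrightarrow> Z \<in> Zsp T \<Longrightarrow> \<omega> \<in> paths 0 s \<Longrightarrow>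
        \<rho> s (\<lambda>\<omega>'. Zt (restr 0 s \<omega>') + Z \<omega>') \<omega> = Zt \<omega> + \<rho> s Z \<omega>"
    using assms(6) unfolding translation_invariant_def by blast
  have DRM: "\<And>s Z W \<omega>. s \<in> {0..T} \<Longrightarrow> Z \<in> Zsp T \<Longrightarrow> W \<in> Zsp T \<Longrightarrow> (\<forall>\<omega> \<in> paths 0 T. Z \<omega> = W \<omega>)
       \<Longrightarrow> \<omega> \<in> paths 0 s \<Longrightarrow> \<rho> s Z \<omega> = \<rho> s W \<omega>"
    using assms(3) unfolding dynamic_risk_measure_def by blast
  have TC: "\<And>Z W. Z \<in> Zsp T \<Longrightarrow> W \<in> Zsp T \<Longrightarrow>
      stoch_le M (\<lambda>\<eta>. \<rho> r Z (path_concat t \<xi> \<eta>)) (\<lambda>\<eta>. \<rho> r W (path_concat t \<xi> \<eta>)) \<Longrightarrow> \<rho> t Z \<xi> \<le> \<rho> t W \<xi>"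
    using assms(4) t0 tr rT \<xi> unfolding stoch_cond_time_consistent_def M_def by blast
  show "\<exists>\<sigma>. law_invariant (P t r (\<xi> t)) \<sigma> \<and>
              (\<forall>c (f :: 'x \<Rightarrow> real). c \<in> Linf_ts 0 T \<longrightarrow>
                 \<rho> t (\<lambda>\<omega>. path_int c 0 T \<omega> + f (\<omega> T)) \<xi>
                   = path_int c 0 t \<xi>
                     + \<sigma> (\<lambda>\<eta>. path_int c t r \<eta>
                              + \<rho> r (\<lambda>\<omega>. path_int c r T \<omega> + f (\<omega> T)) (path_concat t \<xi> \<eta>)))"
  proof (intro exI[of _ \<sigma>] conjI allI impI)
    show "law_invariant (P t r (\<xi> t)) \<sigma>"
      unfolding law_invariant_def M_def[symmetric]
    proof (intro ballI impI)
      fix V W assume V: "V \<in> Linf M" and W: "W \<in> Linf M" and d: "distr M borel V = distr M borel W"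
      have "measure M {\<eta>\<in>space M. V \<eta> > e} = measure M {\<eta>\<in>space M. W \<eta> > e}" for e
      proof -
        have Vm: "V \<in> borel_measurable M" and Wm: "W \<in> borel_measurable M" using V W by (auto simp: Linf_def)
        have "measure M {\<eta>\<in>space M. V \<eta> > e} = measure (distr M borel V) {e<..}"
          by (subst measure_distr[OF Vm]) (auto intro!: arg_cong[where f="measure M"])
        also have "\<dots> = measure (distr M borel W) {e<..}" using d by simp
        also have "\<dots> = measure M {\<eta>\<in>space M. W \<eta> > e}"
          by (subst measure_distr[OF Wm]) (auto intro!: arg_cong[where f="measure M"])
        finally show ?thesis .
      qed
      then have "EQ Z V = EQ Z W" for Z by (simp add: EQ_def)
      then show "\<sigma> V = \<sigma> W" by (simp add: \<sigma>_def)
    qed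
  next
    fix c :: "real \<Rightarrow> 'x \<Rightarrow> real" and f :: "'x \<Rightarrow> real"
    assume c: "c \<in> Linf_ts 0 T"
    define a where "a = path_int c 0 t \<xi>"
    define Zcf where "Zcf = (\<lambda>\<omega>. path_int c 0 T \<omega> + f (\<omega> T))"
    define Z' where "Z' = (\<lambda>\<omega>. path_int c r T \<omega> + f (\<omega> T))"
    define Zr where "Zr = path_int c 0 r"
    define W0 where "W0 = (\<lambda>\<omega>. - a + Zcf \<omega>)"
    define Y where "Y = (\<lambda>\<eta>. path_int c t r \<eta> + \<rho> r Z' (path_concat t \<xi> \<eta>))"
    have T0: "0 \<le> T" using assms(1) by simp
    have Zcf: "Zcf \<in> Zsp T" unfolding Zcf_def by (rule Zsp_cf[OF c]) (use T0 in auto)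
    have Z': "Z' \<in> Zsp T" unfolding Z'_def by (rule Zsp_cf[OF c]) (use t0 tr rT in auto)
    have Zr: "Zr \<in> Zsp r" unfolding Zr_def by (rule Zsp_path_int[OF c]) (use t0 tr rT in auto)
    have W0: "W0 \<in> Zsp T" unfolding W0_def by (rule Zsp_add_const[OF Zcf])
    have ti_t: "\<rho> t W0 \<xi> = - a + \<rho> t Zcf \<xi>"
      using TI[of t "\<lambda>_. - a" Zcf \<xi>, OF _ Zsp_const Zcf \<xi>] t0 tr rT by (simp add: W0_def)
    have Zeq: "\<forall>\<omega>\<in>paths 0 T. Zcf \<omega> = Zr (restr 0 r \<omega>) + Z' \<omega>"
    proof
      fix \<omega> :: "real \<Rightarrow> 'x" assume \<omega>: "\<omega> \<in> paths 0 T"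
      have "Zr (restr 0 r \<omega>) = path_int c 0 r \<omega>" unfolding Zr_def
        by (rule path_int_cong) (auto simp: restr_def clamp_def)
      moreover have "path_int c 0 T \<omega> = path_int c 0 r \<omega> + path_int c r T \<omega>"
        by (rule path_int_split[OF c T0 \<omega>]) (use t0 tr rT in auto)
      ultimately show "Zcf \<omega> = Zr (restr 0 r \<omega>) + Z' \<omega>" by (simp add: Zcf_def Z'_def)
    qed
    have Zsum: "(\<lambda>\<omega>'. Zr (restr 0 r \<omega>') + Z' \<omega>') \<in> Zsp T"
      by (rule Zsp_cong[OF Zcf]) (use Zeq in auto)
    have key: "\<rho> r W0 (path_concat t \<xi> \<eta>) = Y \<eta>" if \<eta>: "\<eta> \<in> space M" for \<eta>
    proof -
      have \<eta>': "\<eta> \<in> paths_from t r (\<xi> t)" using \<eta> spM by simp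
      have cp: "path_concat t \<xi> \<eta> \<in> paths 0 r" by (rule concat_in_paths[OF \<xi> \<eta>' t0 tr])
      have r0T: "r \<in> {0..T}" using t0 tr rT by auto
      have "\<rho> r W0 (path_concat t \<xi> \<eta>) = - a + \<rho> r Zcf (path_concat t \<xi> \<eta>)"
        using TI[of r "\<lambda>_. - a" Zcf "path_concat t \<xi> \<eta>", OF r0T Zsp_const Zcf cp] by (simp add: W0_def)
      also have "\<rho> r Zcf (path_concat t \<xi> \<eta>) = \<rho> r (\<lambda>\<omega>'. Zr (restr 0 r \<omega>') + Z' \<omega>') (path_concat t \<xi> \<eta>)"
        by (rule DRM[OF r0T Zcf Zsum Zeq cp])
      also have "\<dots> = Zr (path_concat t \<xi> \<eta>) + \<rho> r Z' (path_concat t \<xi> \<eta>)"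
        by (rule TI[OF r0T Zr Z' cp])
      also have "Zr (path_concat t \<xi> \<eta>) = path_int c 0 t (path_concat t \<xi> \<eta>) + path_int c t r (path_concat t \<xi> \<eta>)"
        unfolding Zr_def by (rule path_int_split[OF c _ cp]) (use t0 tr rT in auto)
      also have "path_int c 0 t (path_concat t \<xi> \<eta>) = a"
        unfolding a_def by (rule path_int_cong) (auto simp: path_concat_def)
      also have "path_int c t r (path_concat t \<xi> \<eta>) = path_int c t r \<eta>"
        using \<eta>' by (intro path_int_cong) (auto simp: path_concat_def paths_from_def)
      finally show ?thesis by (simp add: Y_def)
    qed
    have EQ0: "EQ W0 Y" unfolding EQ_def using key by (intro allI arg_cong[where f="measure M"]) auto
    define W1 where "W1 = (SOME W. W \<in> Zsp T \<and> EQ W Y)"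
    have W1: "W1 \<in> Zsp T \<and> EQ W1 Y" unfolding W1_def by (rule someI[of _ W0]) (use W0 EQ0 in auto)
    have "stoch_le M (\<lambda>\<eta>. \<rho> r W1 (path_concat t \<xi> \<eta>)) (\<lambda>\<eta>. \<rho> r W0 (path_concat t \<xi> \<eta>))"
      "stoch_le M (\<lambda>\<eta>. \<rho> r W0 (path_concat t \<xi> \<eta>)) (\<lambda>\<eta>. \<rho> r W1 (path_concat t \<xi> \<eta>))"
      using W1 EQ0 by (auto simp: stoch_le_def EQ_def)
    then have "\<rho> t W1 \<xi> = \<rho> t W0 \<xi>" using TC W0 W1 by (meson order_antisym)
    then have "\<sigma> Y = - a + \<rho> t Zcf \<xi>" using ti_t by (simp add: \<sigma>_def W1_def)
    then show "\<rho> t (\<lambda>\<omega>. path_int c 0 T \<omega> + f (\<omega> T)) \<xi>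
                   = path_int c 0 t \<xi>
                     + \<sigma> (\<lambda>\<eta>. path_int c t r \<eta>
                              + \<rho> r (\<lambda>\<omega>. path_int c r T \<omega> + f (\<omega> T)) (path_concat t \<xi> \<eta>))"
      by (simp add: Y_def Z'_def Zcf_def a_def)
  qed
qed

end
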